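(* Let $d\ge1$ and let $1\le k\le 2d$ be an integer with $k(k-1)<2d(2d-1)/c(d)$. Then $\theta^{\rm B}(k,d)=0$.
   Context: For integers $d\ge1$ and $1\le k\le 2d$, let each vertex $x\in\mathbb{Z}^d$, independently of all others, choose a uniformly random subset of exactly $k$ of its $2d$ nearest neighbors (in $\ell_1$-distance). The bidirectional $k$-neighbor graph ($k$-BnG) on $\mathbb{Z}^d$ has an undirected edge between nearest neighbors $x,y$ if and only if $x$ chose $y$ and $y$ chose $x$. We write $\theta^{\rm B}(k,d)=\mathbb{P}(o\rightsquigarrow\infty\text{ in the $k$-BnG on }\mathbb{Z}^d)$, where $o$ is the origin and $o\rightsquigarrow\infty$ is the event that there is an infinite self-avoiding path of edges of the $k$-BnG starting at $o$. The connective constant of $\mathbb{Z}^d$ is $c(d)=\lim_{n\to\infty}c_n(d)^{1/n}$, where $c_n(d)$ is the number of self-avoiding nearest-neighbor paths of length $n$ in $\mathbb{Z}^d$ starting at the origin. *)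

theory Defs
  imports "HOL-Probability.Probability"
begin

text \<open>Sites of the lattice Z^d are functions 'd \<Rightarrow> int, where 'd is a finite
  index type with CARD('d) = d.\<close>

definition nn :: "('d::finite \<Rightarrow> int) \<Rightarrow> ('d \<Rightarrow> int) \<Rightarrow> bool" where
  "nn x y \<longleftrightarrow> (\<Sum>i\<in>UNIV. \<bar>x i - y i\<bar>) = 1"

definition nbrs :: "('d::finite \<Rightarrow> int) \<Rightarrow> ('d \<Rightarrow> int) set" where
  "nbrs x = {y. nn x y}"

definition choices :: "nat \<Rightarrow> ('d::finite \<Rightarrow> int) \<Rightarrow> ('d \<Rightarrow> int) set set" where
  "choices k x = {S. S \<subseteq> nbrs x \<and> card S = k}"

definition BnG_space :: "nat \<Rightarrow> (('d::finite \<Rightarrow> int) \<Rightarrow> ('d \<Rightarrow> int) set) measure" where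
  "BnG_space k = PiM UNIV (\<lambda>x. measure_pmf (pmf_of_set (choices k x)))"

definition BnG_edge :: "(('d::finite \<Rightarrow> int) \<Rightarrow> ('d \<Rightarrow> int) set) \<Rightarrow> ('d \<Rightarrow> int) \<Rightarrow> ('d \<Rightarrow> int) \<Rightarrow> bool" where
  "BnG_edge \<omega> x y \<longleftrightarrow> nn x y \<and> y \<in> \<omega> x \<and> x \<in> \<omega> y"

definition perc_event :: "nat \<Rightarrow> (('d::finite \<Rightarrow> int) \<Rightarrow> ('d \<Rightarrow> int) set) set" where
  "perc_event k = {\<omega> \<in> space (BnG_space k).
      \<exists>p :: nat \<Rightarrow> ('d \<Rightarrow> int). p 0 = (\<lambda>_. 0) \<and> inj p \<and> (\<forall>n. BnG_edge \<omega> (p n) (p (Suc n)))}"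

definition thetaB :: "nat \<Rightarrow> 'd::finite itself \<Rightarrow> real" where
  "thetaB k T = measure (BnG_space k :: (('d \<Rightarrow> int) \<Rightarrow> ('d \<Rightarrow> int) set) measure) (perc_event k)"

definition saw_count :: "'d::finite itself \<Rightarrow> nat \<Rightarrow> nat" where
  "saw_count T n = card {ps :: ('d \<Rightarrow> int) list. length ps = Suc n \<and> ps ! 0 = (\<lambda>_. 0) \<and> distinct ps
      \<and> (\<forall>i<n. nn (ps ! i) (ps ! Suc i))}"

definition conn_const :: "'d::finite itself \<Rightarrow> real" where
  "conn_const T = lim (\<lambda>n. root n (real (saw_count T n)))"

end

theory Submission imports Defs begin

lemma nn_sym: "nn x y = nn y x"
  unfolding nn_def by (simp add: abs_minus_commute)

lemma nn_translate: "nn (x - c) (y - c) = nn x y"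
  unfolding nn_def by simp

lemma nn_le1: "nn x y \<Longrightarrow> \<bar>x j - y j\<bar> \<le> 1"
proof -
  assume "nn x y"
  hence "(\<Sum>i\<in>UNIV. \<bar>x i - y i\<bar>) = 1" by (simp add: nn_def)
  moreover have "\<bar>x j - y j\<bar> \<le> (\<Sum>i\<in>UNIV. \<bar>x i - y i\<bar>)"
    by (rule member_le_sum) auto
  ultimately show ?thesis by simp
qed

lemma nn_iff: "nn x y \<longleftrightarrow> (\<exists>i s. s \<in> {1,-1} \<and> y = x(i := x i + s))"
proof
  assume h: "nn x y"
  have s: "(\<Sum>i\<in>UNIV. \<bar>x i - y i\<bar>) = 1" using h by (simp add: nn_def)
  have "\<exists>i. x i \<noteq> y i"
  proof (rule ccontr)
    assume "\<not> (\<exists>i. x i \<noteq> y i)"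
    hence "(\<Sum>i\<in>UNIV. \<bar>x i - y i\<bar>) = 0" by simp
    with s show False by simp
  qed
  then obtain i where i: "x i \<noteq> y i" by blast
  have split: "(\<Sum>j\<in>UNIV. \<bar>x j - y j\<bar>) = \<bar>x i - y i\<bar> + (\<Sum>j\<in>UNIV - {i}. \<bar>x j - y j\<bar>)"
    by (simp add: sum.remove)
  have ge: "\<bar>x i - y i\<bar> \<ge> 1" using i by linarith
  have nn0: "(\<Sum>j\<in>UNIV - {i}. \<bar>x j - y j\<bar>) \<ge> 0" by (rule sum_nonneg) auto
  have e1: "\<bar>x i - y i\<bar> = 1" using split s ge nn0 by linarith
  have "(\<Sum>j\<in>UNIV - {i}. \<bar>x j - y j\<bar>) = 0" using split s e1 by linarith
  hence "\<forall>j\<in>UNIV - {i}. \<bar>x j - y j\<bar> = 0"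
    by (subst (asm) sum_nonneg_eq_0_iff) auto
  hence oth: "\<And>j. j \<noteq> i \<Longrightarrow> y j = x j" by auto
  have "y = x(i := x i + (y i - x i))"
    using oth by (auto simp: fun_eq_iff)
  moreover have "y i - x i \<in> {1,-1}" using e1 by (auto simp: abs_if split: if_splits)
  ultimately show "\<exists>i s. s \<in> {1,-1} \<and> y = x(i := x i + s)" by blast
next
  assume "\<exists>i s. s \<in> {1,-1} \<and> y = x(i := x i + s)"
  then obtain i s where s: "s \<in> {1,-1}" and y: "y = x(i := x i + s)" by blast
  have "\<And>j. \<bar>x j - y j\<bar> = (if j = i then 1 else 0)" using s y by auto
  hence "(\<Sum>j\<in>UNIV. \<bar>x j - y j\<bar>) = (\<Sum>j\<in>UNIV. (if j = i then 1 else 0))" by simp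
  also have "\<dots> = 1" by simp
  finally show "nn x y" by (simp add: nn_def)
qed

lemma nbrs_eq: "nbrs x = (\<lambda>(i,s). x(i := x i + s)) ` (UNIV \<times> {1,-1})"
  unfolding nbrs_def nn_iff by auto

lemma nbrs_inj: "inj_on (\<lambda>(i,s). x(i := x i + s)) (UNIV \<times> {1::int,-1})"
proof (rule inj_onI, clarify)
  fix i s j t
  assume s: "s \<in> {1::int,-1}" and t: "t \<in> {1::int,-1}" and eq: "x(i := x i + s) = x(j := x j + t)"
  have "i = j"
  proof (rule ccontr)
    assume "i \<noteq> j"
    from fun_cong[OF eq, of i] have "x i + s = x i" using \<open>i \<noteq> j\<close> by simp
    with s show False by auto
  qed
  moreover from fun_cong[OF eq, of i] \<open>i = j\<close> have "s = t" by simp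
  ultimately show "i = j \<and> s = t" by simp
qed

lemma card_nbrs: "card (nbrs (x::'d::finite \<Rightarrow> int)) = 2 * CARD('d)"
proof -
  have "card (nbrs x) = card ((UNIV::'d set) \<times> {1::int,-1})"
    unfolding nbrs_eq using nbrs_inj[of x] by (rule card_image)
  also have "\<dots> = CARD('d) * 2" by (simp add: card_cartesian_product)
  finally show ?thesis by simp
qed

lemma finite_nbrs: "finite (nbrs (x::'d::finite \<Rightarrow> int))"
  unfolding nbrs_eq by simp


lemma mult_aux: "(y::nat) * a = b * z \<Longrightarrow> x * b = c * w \<Longrightarrow> a * (x * y) = c * (w * z)"
  by (metis mult.assoc mult.commute)

lemma binom_id:
  assumes "2 \<le> k" "k \<le> m"
  shows "((m-2) choose (k-2)) * (m*(m-1)) = (m choose k) * (k*(k-1))"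
proof -
  obtain m' where m: "m = Suc (Suc m')" using assms by (metis add_2_eq_Suc le_Suc_ex order_trans)
  obtain k' where k: "k = Suc (Suc k')" using assms by (metis add_2_eq_Suc le_Suc_ex)
  have e1: "Suc (Suc m') * (Suc m' choose Suc k') = (Suc (Suc m') choose Suc (Suc k')) * Suc (Suc k')"
    by (rule Suc_times_binomial_eq)
  have e2: "Suc m' * (m' choose k') = (Suc m' choose Suc k') * Suc k'"
    by (rule Suc_times_binomial_eq)
  have r: "(m' choose k') * (Suc (Suc m') * Suc m') = (Suc (Suc m') choose Suc (Suc k')) * (Suc (Suc k') * Suc k')"
    by (rule mult_aux[OF e2 e1])
  have eqs: "Suc (Suc m') - 2 = m'" "Suc (Suc m') - 1 = Suc m'" "Suc (Suc k') - 2 = k'" "Suc (Suc k') - 1 = Suc k'"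
    by auto
  show ?thesis unfolding m k eqs by (rule r)
qed

lemma card_choices_pair:
  assumes N: "finite N" and a: "a \<in> N" and b: "b \<in> N" and ab: "a \<noteq> b" and k: "2 \<le> k"
  shows "card ({S. S \<subseteq> N \<and> card S = k} \<inter> {S. a \<in> S \<and> b \<in> S}) = (card N - 2) choose (k - 2)"
proof -
  let ?f = "\<lambda>T. insert a (insert b T)"
  let ?D = "{T. T \<subseteq> N - {a,b} \<and> card T = k - 2}"
  have img: "{S. S \<subseteq> N \<and> card S = k} \<inter> {S. a \<in> S \<and> b \<in> S} = ?f ` ?D"
  proof (rule set_eqI, rule iffI)
    fix S assume "S \<in> {S. S \<subseteq> N \<and> card S = k} \<inter> {S. a \<in> S \<and> b \<in> S}"
    hence S: "S \<subseteq> N" "card S = k" "a \<in> S" "b \<in> S" by auto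
    have fS: "finite S" using S N finite_subset by blast
    have "card (S - {a,b}) = k - 2" using S ab fS by (subst card_Diff_subset) auto
    moreover have "S = ?f (S - {a,b})" using S by auto
    ultimately show "S \<in> ?f ` ?D" using S by blast
  next
    fix S assume "S \<in> ?f ` ?D"
    then obtain T where T: "T \<subseteq> N - {a,b}" "card T = k - 2" and S: "S = ?f T" by blast
    have fT: "finite T" using T N finite_subset by blast
    have nT: "a \<notin> T" "b \<notin> T" using T by auto
    have "card S = Suc (Suc (card T))" using S nT fT ab by simp
    hence "card S = k" using T k by simp
    thus "S \<in> {S. S \<subseteq> N \<and> card S = k} \<inter> {S. a \<in> S \<and> b \<in> S}" using S T a b by auto
  qed
  have inj: "inj_on ?f ?D"
  proof (rule inj_onI)
    fix T T' assume "T \<in> ?D" "T' \<in> ?D" "?f T = ?f T'"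
    hence "?f T - {a,b} = ?f T' - {a,b}" by simp
    moreover have "?f T - {a,b} = T" "?f T' - {a,b} = T'" using \<open>T \<in> ?D\<close> \<open>T' \<in> ?D\<close> by auto
    ultimately show "T = T'" by simp
  qed
  have "card (?f ` ?D) = card ?D" by (rule card_image[OF inj])
  also have "\<dots> = card (N - {a,b}) choose (k - 2)" using N by (intro n_subsets) auto
  also have "card (N - {a,b}) = card N - 2" using N a b ab by (subst card_Diff_subset) auto
  finally show ?thesis using img by simp
qed

lemma prob_pair:
  fixes v a b :: "'d::finite \<Rightarrow> int"
  assumes a: "a \<in> nbrs v" and b: "b \<in> nbrs v" and ab: "a \<noteq> b"
    and k1: "1 \<le> k" and k2: "k \<le> 2 * CARD('d)"
  shows "measure (measure_pmf (pmf_of_set (choices k v))) {S. a \<in> S \<and> b \<in> S}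
    = real (k * (k - 1)) / real (2 * CARD('d) * (2 * CARD('d) - 1))"
proof -
  let ?N = "nbrs v" let ?m = "2 * CARD('d)"
  have fN: "finite ?N" by (rule finite_nbrs)
  have cN: "card ?N = ?m" by (rule card_nbrs)
  have fC: "finite (choices k v)"
    unfolding choices_def by (rule finite_subset[of _ "Pow ?N"]) (use fN in auto)
  obtain T where "T \<subseteq> ?N" "card T = k" using k2 cN obtain_subset_with_card_n[of k ?N] by auto
  hence neC: "choices k v \<noteq> {}" unfolding choices_def by auto
  have cC: "card (choices k v) = ?m choose k"
    unfolding choices_def using n_subsets[OF fN, of k] cN by simp
  have m2: "?m \<ge> 2" by (simp add: Suc_leI)
  have cpos: "(?m choose k) > 0" using k2 by simp
  have meas: "measure (measure_pmf (pmf_of_set (choices k v))) {S. a \<in> S \<and> b \<in> S}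
     = card (choices k v \<inter> {S. a \<in> S \<and> b \<in> S}) / card (choices k v)"
    by (rule measure_pmf_of_set[OF neC fC])
  show ?thesis
  proof (cases "k = 1")
    case True
    have "choices k v \<inter> {S. a \<in> S \<and> b \<in> S} = {}"
    proof (rule ccontr)
      assume "choices k v \<inter> {S. a \<in> S \<and> b \<in> S} \<noteq> {}"
      then obtain S where S: "card S = 1" "a \<in> S" "b \<in> S" using True unfolding choices_def by auto
      then obtain z where "S = {z}" by (auto simp: card_Suc_eq)
      with S ab show False by auto
    qed
    thus ?thesis using meas True by simp
  next
    case False
    hence k2': "2 \<le> k" using k1 by simp
    have c2: "card (choices k v \<inter> {S. a \<in> S \<and> b \<in> S}) = (?m - 2) choose (k - 2)"
      unfolding choices_def using card_choices_pair[OF fN a b ab k2'] cN by simp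
    have bid: "real ((?m-2) choose (k-2)) * real (?m*(?m-1)) = real (?m choose k) * real (k*(k-1))"
      using binom_id[OF k2' k2] by (metis of_nat_mult)
    have "?m*(?m-1) > 0" using m2 by (intro mult_pos_pos) arith+
    hence mpos: "real (?m*(?m-1)) > 0" by (simp only: of_nat_0_less_iff)
    have ne1: "real (?m choose k) \<noteq> 0" using cpos by simp
    have ne2: "real (?m*(?m-1)) \<noteq> 0" using mpos by linarith
    show ?thesis unfolding meas c2 cC
      apply (rule iffD2[OF frac_eq_eq[OF ne1 ne2]])
      using bid by (metis mult.commute)
  qed
qed


definition sawset :: "nat \<Rightarrow> ('d::finite \<Rightarrow> int) list set" where
  "sawset n = {ps. length ps = Suc n \<and> ps ! 0 = (\<lambda>_. 0) \<and> distinct ps \<and> (\<forall>i<n. nn (ps ! i) (ps ! Suc i))}"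

lemma saw_count_eq: "saw_count TYPE('d::finite) n = card (sawset n :: ('d \<Rightarrow> int) list set)"
  unfolding saw_count_def sawset_def by simp

lemma saw_bound:
  assumes "ps \<in> sawset n" "i \<le> n"
  shows "\<bar>(ps ! i) j\<bar> \<le> int i"
  using assms(2)
proof (induction i)
  case 0
  then show ?case using assms(1) by (simp add: sawset_def)
next
  case (Suc i)
  have "nn (ps ! i) (ps ! Suc i)" using assms(1) Suc.prems by (simp add: sawset_def)
  hence "\<bar>(ps ! i) j - (ps ! Suc i) j\<bar> \<le> 1" by (rule nn_le1)
  moreover have "\<bar>(ps ! i) j\<bar> \<le> int i" using Suc by simp
  ultimately show ?case by simp
qed

lemma finite_sawset: "finite (sawset n :: ('d::finite \<Rightarrow> int) list set)"
proof -
  let ?B = "PiE (UNIV::'d set) (\<lambda>_. {-int n..int n})"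
  have fB: "finite ?B" by (rule finite_PiE) auto
  have "sawset n \<subseteq> {xs. set xs \<subseteq> ?B \<and> length xs = Suc n}"
  proof (rule subsetI)
    fix ps assume ps: "ps \<in> (sawset n :: ('d \<Rightarrow> int) list set)"
    have len: "length ps = Suc n" using ps by (simp add: sawset_def)
    have "set ps \<subseteq> ?B"
    proof
      fix y assume "y \<in> set ps"
      then obtain i where i: "i < length ps" "y = ps ! i" by (auto simp: in_set_conv_nth)
      have bnd: "\<And>j. \<bar>y j\<bar> \<le> int i" using saw_bound[OF ps, of i] i len by simp
      have "i \<le> n" using i len by simp
      hence "\<And>j. \<bar>y j\<bar> \<le> int n" using bnd by (meson order_trans of_nat_le_iff)
      hence "\<And>j. y j \<in> {-int n..int n}" by (simp add: abs_le_iff) (meson abs_le_iff minus_le_iff)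
      thus "y \<in> ?B" by (simp add: PiE_UNIV_domain)
    qed
    thus "ps \<in> {xs. set xs \<subseteq> ?B \<and> length xs = Suc n}" using len by simp
  qed
  thus ?thesis using finite_lists_length_eq[OF fB] finite_subset by blast
qed

lemma sawset_nonempty: "sawset n \<noteq> ({} :: ('d::finite \<Rightarrow> int) list set)"
proof -
  obtain j0 :: 'd where True by blast
  let ?e = "\<lambda>t::nat. (\<lambda>j::'d. if j = j0 then int t else 0)"
  let ?ps = "map ?e [0..<Suc n]"
  have inj: "inj_on ?e {0..<Suc n}"
  proof (rule inj_onI)
    fix s t assume "?e s = ?e t"
    from fun_cong[OF this, of j0] show "s = t" by simp
  qed
  have "nn (?e i) (?e (Suc i))" for i
  proof -
    have "\<And>j. \<bar>?e i j - ?e (Suc i) j\<bar> = (if j = j0 then 1 else 0)" by auto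
    hence "(\<Sum>j\<in>UNIV. \<bar>?e i j - ?e (Suc i) j\<bar>) = (\<Sum>j\<in>UNIV. (if j = j0 then 1 else 0))" by simp
    thus ?thesis by (simp add: nn_def)
  qed
  moreover have pn: "\<And>i. i < Suc n \<Longrightarrow> ?ps ! i = ?e i"
    by (subst nth_map_upt) auto
  ultimately have "\<forall>i<n. nn (?ps ! i) (?ps ! Suc i)" by simp
  moreover have "distinct ?ps" using inj by (simp add: distinct_map del: upt_Suc)
  moreover have "?ps ! 0 = (\<lambda>_. 0)" using pn[of 0] by (simp add: fun_eq_iff)
  ultimately have "?ps \<in> sawset n"
    unfolding sawset_def by (simp del: upt_Suc)
  thus ?thesis by blast
qed

lemma card_sawset_pos: "card (sawset n :: ('d::finite \<Rightarrow> int) list set) \<ge> 1"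
  using finite_sawset[where 'd='d] sawset_nonempty[where 'd='d]
  by (simp add: Suc_leI card_gt_0_iff)

lemma sawset_submult:
  "card (sawset (n + m) :: ('d::finite \<Rightarrow> int) list set)
     \<le> card (sawset n :: ('d \<Rightarrow> int) list set) * card (sawset m :: ('d \<Rightarrow> int) list set)"
proof -
  define \<phi> where "\<phi> = (\<lambda>ps :: ('d \<Rightarrow> int) list. (take (Suc n) ps, map (\<lambda>v. v - ps ! n) (drop n ps)))"
  have maps: "\<phi> ` sawset (n + m) \<subseteq> sawset n \<times> sawset m"
  proof (rule image_subsetI)
    fix ps assume ps: "ps \<in> (sawset (n + m) :: ('d \<Rightarrow> int) list set)"
    have len: "length ps = Suc (n + m)" and p0: "ps ! 0 = (\<lambda>_. 0)" and d: "distinct ps"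
      and e: "\<And>i. i < n + m \<Longrightarrow> nn (ps ! i) (ps ! Suc i)" using ps by (auto simp: sawset_def)
    have A: "take (Suc n) ps \<in> sawset n"
      unfolding sawset_def using len p0 d e by auto
    have inj: "inj (\<lambda>v::'d \<Rightarrow> int. v - ps ! n)" by (rule injI) (simp add: fun_eq_iff fun_diff_def)
    have B: "map (\<lambda>v. v - ps ! n) (drop n ps) \<in> sawset m"
      unfolding sawset_def using len d e
      by (auto simp: distinct_map inj_on_subset[OF inj] nn_translate fun_eq_iff)
    show "\<phi> ps \<in> sawset n \<times> sawset m" using A B by (simp add: \<phi>_def)
  qed
  have inj: "inj_on \<phi> (sawset (n + m))"
  proof (rule inj_onI)
    fix ps qs assume ps: "ps \<in> (sawset (n + m) :: ('d \<Rightarrow> int) list set)" and qs: "qs \<in> (sawset (n + m) :: ('d \<Rightarrow> int) list set)"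
      and eq: "\<phi> ps = \<phi> qs"
    have lp: "length ps = Suc (n + m)" "length qs = Suc (n + m)" using ps qs by (auto simp: sawset_def)
    have t: "take (Suc n) ps = take (Suc n) qs" using eq by (simp add: \<phi>_def)
    have pn: "ps ! n = qs ! n"
    proof -
      have "take (Suc n) ps ! n = take (Suc n) qs ! n" using t by simp
      thus ?thesis by simp
    qed
    have "map (\<lambda>v. v - ps ! n) (drop n ps) = map (\<lambda>v. v - ps ! n) (drop n qs)"
      using eq pn by (simp add: \<phi>_def)
    moreover have "inj (\<lambda>v::'d \<Rightarrow> int. v - ps ! n)" by (rule injI) (simp add: fun_eq_iff fun_diff_def)
    ultimately have dr: "drop n ps = drop n qs" by (simp add: inj_map_eq_map)
    have tn: "take n ps = take n qs"
    proof -
      have "take n (take (Suc n) ps) = take n (take (Suc n) qs)" using t by simp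
      thus ?thesis by (simp add: min_def)
    qed
    show "ps = qs" by (metis append_take_drop_id dr tn)
  qed
  have "card (sawset (n + m) :: ('d \<Rightarrow> int) list set) \<le> card ((sawset n :: ('d \<Rightarrow> int) list set) \<times> (sawset m :: ('d \<Rightarrow> int) list set))"
    by (rule card_inj_on_le[OF inj maps]) (simp add: finite_sawset)
  thus ?thesis by (simp add: card_cartesian_product)
qed


lemma lin_aux: "(p::real) \<le> q + r \<Longrightarrow> r < (y - l) / 2 \<Longrightarrow> q < l + (y - l) / 2 \<Longrightarrow> p < y"
  by argo

lemma subadd_iter:
  fixes a :: "nat \<Rightarrow> real"
  assumes sub: "\<And>n m. a (n + m) \<le> a n + a m"
  shows "a (q * m + r) \<le> real q * a m + a r"
proof (induction q)
  case 0 then show ?case by simp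
next
  case (Suc q)
  have "a (Suc q * m + r) = a (m + (q * m + r))" by (simp add: add.assoc)
  also have "\<dots> \<le> a m + a (q * m + r)" by (rule sub)
  also have "\<dots> \<le> a m + (real q * a m + a r)" using Suc by simp
  finally show ?case by (simp add: algebra_simps)
qed

lemma fekete:
  fixes a :: "nat \<Rightarrow> real"
  assumes nonneg: "\<And>n. a n \<ge> 0" and sub: "\<And>n m. a (n + m) \<le> a n + a m"
  shows "convergent (\<lambda>n. a n / real n)"
proof -
  let ?X = "(\<lambda>n. a n / real n) ` {1..}"
  define L where "L = Inf ?X"
  have ne: "?X \<noteq> {}" by auto
  have bdd: "bdd_below ?X" by (rule bdd_belowI[of _ 0]) (auto intro: divide_nonneg_nonneg nonneg)
  have "(\<lambda>n. a n / real n) \<longlonglongrightarrow> L"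
  proof (rule order_tendstoI)
    fix y assume "y < L"
    have "\<forall>n\<ge>1. y < a n / real n"
    proof (intro allI impI)
      fix n :: nat assume "n \<ge> 1"
      hence "L \<le> a n / real n" unfolding L_def by (intro cInf_lower bdd) auto
      thus "y < a n / real n" using \<open>y < L\<close> by simp
    qed
    thus "eventually (\<lambda>n. y < a n / real n) sequentially"
      unfolding eventually_sequentially by blast
  next
    fix y assume "L < y"
    define \<epsilon> where "\<epsilon> = y - L"
    have \<epsilon>: "\<epsilon> > 0" using \<open>L < y\<close> by (simp add: \<epsilon>_def)
    have "Inf ?X < L + \<epsilon>/2" using \<epsilon> by (simp add: L_def)
    then obtain m where m: "m \<ge> 1" "a m / real m < L + \<epsilon>/2"
      using cInf_less_iff[OF ne bdd] by auto
    define B where "B = (\<Sum>r<m. a r)"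
    have B0: "B \<ge> 0" unfolding B_def by (rule sum_nonneg) (simp add: nonneg)
    obtain N :: nat where N: "real N > 2 * B / \<epsilon>" using reals_Archimedean2 by blast
    have "\<forall>n\<ge>Suc N. a n / real n < y"
    proof (intro allI impI)
      fix n assume n: "n \<ge> Suc N"
      have npos: "real n > 0" using n by simp
      define q where "q = n div m"
      define r where "r = n mod m"
      have nqr: "n = q * m + r" by (simp add: q_def r_def)
      have rm: "r < m" using m by (simp add: r_def)
      have arB: "a r \<le> B" unfolding B_def using rm
        by (intro member_le_sum) (auto simp: nonneg)
      have qm: "real q * real m \<le> real n" using nqr by (metis le_add1 of_nat_le_iff of_nat_mult)
      have "a n \<le> real q * a m + a r" using subadd_iter[OF sub, of q m r] nqr by simp
      also have "\<dots> \<le> real q * a m + B" using arB by simp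
      finally have an: "a n \<le> real q * a m + B" .
      have "real q * a m = (real q * real m) * (a m / real m)" using m by simp
      also have "\<dots> \<le> real n * (a m / real m)"
        using qm by (intro mult_right_mono) (auto intro: divide_nonneg_nonneg nonneg)
      finally have "a n \<le> real n * (a m / real m) + B" using an by simp
      hence st1: "a n / real n \<le> a m / real m + B / real n"
        using npos by (simp add: field_simps)
      have st2: "B / real n < \<epsilon> / 2"
      proof -
        have "real n > 2 * B / \<epsilon>" using N n by simp
        hence "real n * \<epsilon> > 2 * B" using \<epsilon> by (simp add: field_simps)
        thus ?thesis using npos \<epsilon> by (simp add: field_simps)
      qed
      show "a n / real n < y" using st1 st2 m(2) unfolding \<epsilon>_def by (rule lin_aux)
    qed
    thus "eventually (\<lambda>n. a n / real n < y) sequentially"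
      unfolding eventually_sequentially by blast
  qed
  thus ?thesis by (rule convergentI)
qed

lemma conv_root:
  "convergent (\<lambda>n. root n (real (saw_count TYPE('d::finite) n)))"
proof -
  define c where "c = (\<lambda>n. real (card (sawset n :: ('d \<Rightarrow> int) list set)))"
  have c1: "\<And>n. c n \<ge> 1" unfolding c_def using card_sawset_pos[where 'd='d] by simp
  define a where "a = (\<lambda>n. ln (c n))"
  have nonneg: "\<And>n. a n \<ge> 0" unfolding a_def using c1 by simp
  have sub: "\<And>n m. a (n + m) \<le> a n + a m"
  proof -
    fix n m
    have "c (n + m) \<le> c n * c m" unfolding c_def
      using sawset_submult[where 'd='d, of n m] by (metis of_nat_le_iff of_nat_mult)
    hence "ln (c (n + m)) \<le> ln (c n * c m)" using c1 by (subst ln_le_cancel_iff) (auto intro: mult_pos_pos less_le_trans[OF zero_less_one])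
    also have "\<dots> = ln (c n) + ln (c m)" using c1 by (intro ln_mult_pos) (auto intro: less_le_trans[OF zero_less_one])
    finally show "a (n + m) \<le> a n + a m" by (simp add: a_def)
  qed
  obtain L where L: "(\<lambda>n. a n / real n) \<longlonglongrightarrow> L"
    using fekete[OF nonneg sub] by (auto simp: convergent_def)
  have "(\<lambda>n. exp (a n / real n)) \<longlonglongrightarrow> exp L" by (rule tendsto_exp[OF L])
  moreover have "eventually (\<lambda>n. exp (a n / real n) = root n (real (saw_count TYPE('d) n))) sequentially"
  proof -
    have "\<forall>n\<ge>1. exp (a n / real n) = root n (real (saw_count TYPE('d) n))"
    proof (intro allI impI)
      fix n :: nat assume "n \<ge> 1"
      have cpos: "c n > 0" using c1[of n] by simp
      have "root n (real (saw_count TYPE('d) n)) = root n (c n)" by (simp add: c_def saw_count_eq)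
      also have "\<dots> = c n powr (1 / real n)" using \<open>n \<ge> 1\<close> cpos by (intro root_powr_inverse) auto
      also have "\<dots> = exp (a n / real n)" using cpos by (simp add: powr_def a_def)
      finally show "exp (a n / real n) = root n (real (saw_count TYPE('d) n))" by simp
    qed
    thus ?thesis unfolding eventually_sequentially by blast
  qed
  ultimately have "(\<lambda>n. root n (real (saw_count TYPE('d) n))) \<longlonglongrightarrow> exp L"
    by (rule Lim_transform_eventually)
  thus ?thesis by (rule convergentI)
qed

lemma koenig:
  fixes T :: "'a list set"
  assumes pc: "\<And>xs ys. xs @ ys \<in> T \<Longrightarrow> xs \<in> T"
    and fin: "\<And>xs. finite {a. xs @ [a] \<in> T}"
    and long: "\<And>n. \<exists>xs\<in>T. length xs = n"
  shows "\<exists>f. \<forall>n. map f [0..<n] \<in> T"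
proof -
  define good where "good = (\<lambda>xs. infinite {ys. xs @ ys \<in> T})"
  have g0: "good []"
  proof -
    have "infinite T"
    proof
      assume "finite T"
      hence "finite (length ` T)" by simp
      then obtain N where "\<forall>l\<in>length ` T. l \<le> N" using finite_nat_set_iff_bounded_le by blast
      moreover obtain xs where "xs \<in> T" "length xs = Suc N" using long by blast
      ultimately show False by force
    qed
    thus ?thesis by (simp add: good_def)
  qed
  have gstep: "\<exists>a. good (xs @ [a])" if g: "good xs" for xs
  proof (rule ccontr)
    assume "\<not> (\<exists>a. good (xs @ [a]))"
    hence fa: "\<And>a. finite {ys. (xs @ [a]) @ ys \<in> T}" by (simp add: good_def)
    have "{ys. xs @ ys \<in> T} \<subseteq> {[]} \<union> (\<Union>a\<in>{a. xs @ [a] \<in> T}. (\<lambda>ys. a # ys) ` {ys. (xs @ [a]) @ ys \<in> T})"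
    proof
      fix ys assume ys: "ys \<in> {ys. xs @ ys \<in> T}"
      show "ys \<in> {[]} \<union> (\<Union>a\<in>{a. xs @ [a] \<in> T}. (\<lambda>ys. a # ys) ` {ys. (xs @ [a]) @ ys \<in> T})"
      proof (cases ys)
        case Nil then show ?thesis by simp
      next
        case (Cons a zs)
        have "(xs @ [a]) @ zs \<in> T" using ys Cons by simp
        moreover hence "xs @ [a] \<in> T" by (rule pc)
        ultimately show ?thesis using Cons by blast
      qed
    qed
    moreover have "finite ({[]} \<union> (\<Union>a\<in>{a. xs @ [a] \<in> T}. (\<lambda>ys. a # ys) ` {ys. (xs @ [a]) @ ys \<in> T}))"
      using fin[of xs] fa by blast
    ultimately have "finite {ys. xs @ ys \<in> T}" by (rule finite_subset)
    with g show False by (simp add: good_def)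
  qed
  have gT: "xs \<in> T" if "good xs" for xs
  proof -
    from that have "{ys. xs @ ys \<in> T} \<noteq> {}" unfolding good_def by (metis finite.emptyI)
    then obtain ys where "xs @ ys \<in> T" by blast
    thus ?thesis by (rule pc)
  qed
  define nxt where "nxt = (\<lambda>xs. xs @ [SOME a. good (xs @ [a])])"
  have gn: "good xs \<Longrightarrow> good (nxt xs)" for xs
    unfolding nxt_def using gstep[of xs] by (metis someI_ex)
  define g where "g = (\<lambda>n. (nxt ^^ n) [])"
  have gg: "good (g n)" for n
    by (induction n) (auto simp: g_def g0 gn)
  have lg: "length (g n) = n" for n
    by (induction n) (auto simp: g_def nxt_def)
  define f where "f = (\<lambda>n. g (Suc n) ! n)"
  have mg: "map f [0..<n] = g n" for n
  proof (induction n)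
    case 0 then show ?case by (simp add: g_def)
  next
    case (Suc n)
    have gs: "g (Suc n) = g n @ [SOME a. good (g n @ [a])]" by (simp add: g_def nxt_def)
    have "f n = (SOME a. good (g n @ [a]))" unfolding f_def gs using lg[of n] nth_append_length by metis
    thus ?case using Suc gs by simp
  qed
  show ?thesis using gT[OF gg] mg by metis
qed

lemma space_BnG: "space (BnG_space k :: (('d::finite \<Rightarrow> int) \<Rightarrow> ('d \<Rightarrow> int) set) measure) = UNIV"
  unfolding BnG_space_def by (simp add: space_PiM PiE_UNIV_domain)

lemma prob_BnG: "prob_space (BnG_space k :: (('d::finite \<Rightarrow> int) \<Rightarrow> ('d \<Rightarrow> int) set) measure)"
  unfolding BnG_space_def by (rule prob_space_PiM) (rule prob_space_measure_pmf)

lemma comp_sets: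
  "{\<omega> \<in> space (BnG_space k). P (\<omega> x)} \<in> sets (BnG_space k :: (('d::finite \<Rightarrow> int) \<Rightarrow> ('d \<Rightarrow> int) set) measure)"
proof -
  have m: "(\<lambda>\<omega>. \<omega> x) \<in> measurable (BnG_space k :: (('d \<Rightarrow> int) \<Rightarrow> ('d \<Rightarrow> int) set) measure)
             (measure_pmf (pmf_of_set (choices k x)))"
    unfolding BnG_space_def by (rule measurable_component_singleton) simp
  have "(\<lambda>\<omega>. \<omega> x) -` {S. P S} \<inter> space (BnG_space k) \<in> sets (BnG_space k :: (('d \<Rightarrow> int) \<Rightarrow> ('d \<Rightarrow> int) set) measure)"
    by (rule measurable_sets[OF m]) simp
  moreover have "(\<lambda>\<omega>. \<omega> x) -` {S. P S} \<inter> space (BnG_space k) = {\<omega> \<in> space (BnG_space k). P (\<omega> x)}"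
    by auto
  ultimately show ?thesis by simp
qed

lemma edge_sets:
  "{\<omega> \<in> space (BnG_space k). BnG_edge \<omega> x y} \<in> sets (BnG_space k :: (('d::finite \<Rightarrow> int) \<Rightarrow> ('d \<Rightarrow> int) set) measure)"
proof -
  have "{\<omega> \<in> space (BnG_space k). BnG_edge \<omega> x y} =
     {\<omega> \<in> space (BnG_space k). nn x y} \<inter> ({\<omega> \<in> space (BnG_space k). y \<in> \<omega> x} \<inter> {\<omega> \<in> space (BnG_space k). x \<in> \<omega> y})"
    unfolding BnG_edge_def by auto
  moreover have "{\<omega> \<in> space (BnG_space k). nn x y} \<in> sets (BnG_space k :: (('d \<Rightarrow> int) \<Rightarrow> ('d \<Rightarrow> int) set) measure)"
    by (cases "nn x y") auto
  ultimately show ?thesis using comp_sets[of k "\<lambda>S. y \<in> S" x] comp_sets[of k "\<lambda>S. x \<in> S" y] by auto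
qed

definition Apath :: "nat \<Rightarrow> nat \<Rightarrow> (('d::finite \<Rightarrow> int) \<Rightarrow> ('d \<Rightarrow> int) set) set" where
  "Apath k n = {\<omega> \<in> space (BnG_space k). \<exists>ps\<in>sawset n. \<forall>i\<in>{..<n}. BnG_edge \<omega> (ps ! i) (ps ! Suc i)}"

lemma Apath_sets: "Apath k n \<in> sets (BnG_space k :: (('d::finite \<Rightarrow> int) \<Rightarrow> ('d \<Rightarrow> int) set) measure)"
  unfolding Apath_def
  by (intro sets.sets_Collect_finite_Ex sets.sets_Collect_countable_All' edge_sets finite_sawset) auto

lemma perc_eq:
  "perc_event k = {\<omega> \<in> space (BnG_space k). \<forall>n. \<omega> \<in> (Apath k n :: (('d::finite \<Rightarrow> int) \<Rightarrow> ('d \<Rightarrow> int) set) set)}"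
proof (rule set_eqI, rule iffI)
  fix \<omega> :: "('d \<Rightarrow> int) \<Rightarrow> ('d \<Rightarrow> int) set"
  assume "\<omega> \<in> perc_event k"
  then obtain p where sp: "\<omega> \<in> space (BnG_space k)" and p0: "p 0 = (\<lambda>_. 0)" and ip: "inj p"
    and pe: "\<And>n. BnG_edge \<omega> (p n) (p (Suc n))" unfolding perc_event_def by blast
  have "\<omega> \<in> Apath k n" for n
  proof -
    let ?ps = "map p [0..<Suc n]"
    have nth: "\<And>i. i < Suc n \<Longrightarrow> ?ps ! i = p i" by (subst nth_map_upt) auto
    have "?ps \<in> sawset n"
      unfolding sawset_def using nth[of 0] p0 ip pe nth
      by (auto simp: distinct_map inj_on_subset[OF ip] BnG_edge_def simp del: upt_Suc)
    moreover have "\<forall>i\<in>{..<n}. BnG_edge \<omega> (?ps ! i) (?ps ! Suc i)" using nth pe by simp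
    ultimately show ?thesis unfolding Apath_def using sp by blast
  qed
  thus "\<omega> \<in> {\<omega> \<in> space (BnG_space k). \<forall>n. \<omega> \<in> Apath k n}" using sp by blast
next
  fix \<omega> :: "('d \<Rightarrow> int) \<Rightarrow> ('d \<Rightarrow> int) set"
  assume "\<omega> \<in> {\<omega> \<in> space (BnG_space k). \<forall>n. \<omega> \<in> Apath k n}"
  hence sp: "\<omega> \<in> space (BnG_space k)" and A: "\<And>n. \<omega> \<in> Apath k n" by auto
  define T where "T = {ps :: ('d \<Rightarrow> int) list. (ps \<noteq> [] \<longrightarrow> ps ! 0 = (\<lambda>_. 0)) \<and> distinct ps \<and>
      (\<forall>i. Suc i < length ps \<longrightarrow> BnG_edge \<omega> (ps ! i) (ps ! Suc i))}"
  have pc: "xs \<in> T" if "xs @ ys \<in> T" for xs ys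
  proof -
    have "xs \<noteq> [] \<Longrightarrow> xs ! 0 = (\<lambda>_. 0)" using that unfolding T_def by (auto simp: nth_append)
    moreover have "distinct xs" using that unfolding T_def by auto
    moreover have "BnG_edge \<omega> (xs ! i) (xs ! Suc i)" if "Suc i < length xs" for i
    proof -
      have "BnG_edge \<omega> ((xs @ ys) ! i) ((xs @ ys) ! Suc i)" using \<open>xs @ ys \<in> T\<close> that unfolding T_def by auto
      thus ?thesis using that by (simp add: nth_append)
    qed
    ultimately show ?thesis unfolding T_def by blast
  qed
  have fin: "finite {a. xs @ [a] \<in> T}" for xs
  proof (cases "xs = []")
    case True
    have "{a. xs @ [a] \<in> T} \<subseteq> {(\<lambda>_. 0)}" using True unfolding T_def by auto
    thus ?thesis using finite_subset by blast
  next
    case False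
    have "{a. xs @ [a] \<in> T} \<subseteq> nbrs (last xs)"
    proof
      fix a assume "a \<in> {a. xs @ [a] \<in> T}"
      hence h: "\<forall>i. Suc i < length (xs @ [a]) \<longrightarrow> BnG_edge \<omega> ((xs @ [a]) ! i) ((xs @ [a]) ! Suc i)"
        unfolding T_def by blast
      have "Suc (length xs - 1) < length (xs @ [a])" using False by simp
      with h have "BnG_edge \<omega> ((xs @ [a]) ! (length xs - 1)) ((xs @ [a]) ! Suc (length xs - 1))"
        by blast
      moreover have "Suc (length xs - 1) = length xs" using False by simp
      ultimately have "BnG_edge \<omega> ((xs @ [a]) ! (length xs - 1)) a" by simp
      hence "nn (last xs) a" using False by (simp add: BnG_edge_def nth_append last_conv_nth)
      thus "a \<in> nbrs (last xs)" by (simp add: nbrs_def)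
    qed
    thus ?thesis using finite_nbrs finite_subset by blast
  qed
  have long: "\<exists>xs\<in>T. length xs = n" for n
  proof (cases n)
    case 0
    have "[] \<in> T" unfolding T_def by simp
    thus ?thesis using 0 by auto
  next
    case (Suc m)
    obtain ps where ps: "ps \<in> sawset m" and e: "\<forall>i\<in>{..<m}. BnG_edge \<omega> (ps ! i) (ps ! Suc i)"
      using A[of m] unfolding Apath_def by blast
    have "ps \<in> T" using ps e unfolding T_def sawset_def by auto
    moreover have "length ps = n" using ps Suc by (simp add: sawset_def)
    ultimately show ?thesis by blast
  qed
  have "\<exists>f. \<forall>n. map f [0..<n] \<in> T"
    apply (rule koenig)
    using pc apply blast
    using fin apply blast
    using long apply blast
    done
  then obtain f where f: "\<And>n. map f [0..<n] \<in> T" by blast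
  have f0: "f 0 = (\<lambda>_. 0)" using f[of 1] unfolding T_def by simp
  have fi: "inj f"
  proof (rule injI)
    fix i j assume "f i = f j"
    have "distinct (map f [0..<Suc (i + j)])" using f unfolding T_def by blast
    hence "inj_on f {0..<Suc (i + j)}" by (simp add: distinct_map del: upt_Suc)
    thus "i = j" using \<open>f i = f j\<close> by (auto dest: inj_onD)
  qed
  have fe: "BnG_edge \<omega> (f n) (f (Suc n))" for n
  proof -
    have "map f [0..<Suc (Suc n)] \<in> T" by (rule f)
    hence "BnG_edge \<omega> (map f [0..<Suc (Suc n)] ! n) (map f [0..<Suc (Suc n)] ! Suc n)"
      unfolding T_def by auto
    moreover have "map f [0..<Suc (Suc n)] ! n = f n" "map f [0..<Suc (Suc n)] ! Suc n = f (Suc n)"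
      by (subst nth_map_upt; simp)+
    ultimately show ?thesis by simp
  qed
  show "\<omega> \<in> perc_event k" unfolding perc_event_def using sp f0 fi fe by blast
qed

lemma perc_sets: "perc_event k \<in> sets (BnG_space k :: (('d::finite \<Rightarrow> int) \<Rightarrow> ('d \<Rightarrow> int) set) measure)"
proof -
  have "{\<omega> \<in> space (BnG_space k). \<forall>n\<in>UNIV. \<omega> \<in> (Apath k n :: (('d \<Rightarrow> int) \<Rightarrow> ('d \<Rightarrow> int) set) set)}
     \<in> sets (BnG_space k :: (('d \<Rightarrow> int) \<Rightarrow> ('d \<Rightarrow> int) set) measure)"
  proof (intro sets.sets_Collect_countable_All')
    fix n
    have "{\<omega> \<in> space (BnG_space k). \<omega> \<in> (Apath k n :: (('d \<Rightarrow> int) \<Rightarrow> ('d \<Rightarrow> int) set) set)} = Apath k n"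
      by (auto simp: Apath_def)
    thus "{\<omega> \<in> space (BnG_space k). \<omega> \<in> (Apath k n :: (('d \<Rightarrow> int) \<Rightarrow> ('d \<Rightarrow> int) set) set)}
       \<in> sets (BnG_space k :: (('d \<Rightarrow> int) \<Rightarrow> ('d \<Rightarrow> int) set) measure)" using Apath_sets by simp
  qed simp
  thus ?thesis by (simp add: perc_eq)
qed


lemma Eps_bound:
  fixes ps :: "('d::finite \<Rightarrow> int) list"
  assumes ps: "ps \<in> sawset (Suc n)" and k1: "1 \<le> k" and k2: "k \<le> 2 * CARD('d)"
  shows "measure (BnG_space k) {\<omega> \<in> space (BnG_space k). \<forall>i\<in>{..<Suc n}. BnG_edge \<omega> (ps ! i) (ps ! Suc i)}
    \<le> (real (k * (k - 1)) / real (2 * CARD('d) * (2 * CARD('d) - 1))) ^ n"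
proof -
  let ?q = "real (k * (k - 1)) / real (2 * CARD('d) * (2 * CARD('d) - 1))"
  let ?Mf = "\<lambda>x::'d \<Rightarrow> int. measure_pmf (pmf_of_set (choices k x))"
  let ?E = "{\<omega> \<in> space (BnG_space k). \<forall>i\<in>{..<Suc n}. BnG_edge \<omega> (ps ! i) (ps ! Suc i)}"
  define J where "J = (\<lambda>i. ps ! Suc i) ` {..<n}"
  define X where "X = (\<lambda>v. {S. \<forall>j<n. ps ! Suc j = v \<longrightarrow> ps ! j \<in> S \<and> ps ! Suc (Suc j) \<in> S})"
  define B where "B = prod_emb UNIV ?Mf J (PiE J X)"
  have len: "length ps = Suc (Suc n)" and dps: "distinct ps"
    and enn: "\<And>i. i < Suc n \<Longrightarrow> nn (ps ! i) (ps ! Suc i)" using ps by (auto simp: sawset_def)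
  interpret P: prob_space "BnG_space k :: (('d \<Rightarrow> int) \<Rightarrow> ('d \<Rightarrow> int) set) measure" by (rule prob_BnG)
  have fJ: "finite J" unfolding J_def by simp
  have Bs: "B \<in> sets (BnG_space k)"
    unfolding B_def BnG_space_def by (rule sets_PiM_I) (use fJ in auto)
  have EB: "?E \<subseteq> B"
  proof
    fix \<omega> assume w: "\<omega> \<in> ?E"
    have "\<omega> v \<in> X v" if "v \<in> J" for v
      unfolding X_def
    proof (intro CollectI allI impI)
      fix j assume j: "j < n" "ps ! Suc j = v"
      have "BnG_edge \<omega> (ps ! j) (ps ! Suc j)" using w j by auto
      moreover have "BnG_edge \<omega> (ps ! Suc j) (ps ! Suc (Suc j))" using w j by auto
      ultimately show "ps ! j \<in> \<omega> v \<and> ps ! Suc (Suc j) \<in> \<omega> v" using j by (auto simp: BnG_edge_def)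
    qed
    thus "\<omega> \<in> B" unfolding B_def by (auto simp: prod_emb_iff)
  qed
  have "measure (BnG_space k) ?E \<le> measure (BnG_space k) B"
    by (rule P.finite_measure_mono[OF EB Bs])
  also have "measure (BnG_space k) B = (\<Prod>v\<in>J. measure (?Mf v) (X v))"
  proof -
    have "emeasure (BnG_space k) B = (\<Prod>v\<in>J. emeasure (?Mf v) (X v))"
      unfolding B_def BnG_space_def
      by (rule emeasure_PiM_emb) (auto simp: fJ prob_space_measure_pmf)
    also have "\<dots> = (\<Prod>v\<in>J. ennreal (measure (?Mf v) (X v)))"
      by (simp add: measure_pmf.emeasure_eq_measure)
    also have "\<dots> = ennreal (\<Prod>v\<in>J. measure (?Mf v) (X v))"
      by (rule prod_ennreal) simp
    finally show ?thesis by (simp add: measure_def prod_nonneg)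
  qed
  also have "\<dots> = (\<Prod>i<n. measure (?Mf (ps ! Suc i)) (X (ps ! Suc i)))"
  proof -
    have "inj_on (\<lambda>i. ps ! Suc i) {..<n}"
      by (rule inj_onI) (use dps len in \<open>auto simp: nth_eq_iff_index_eq\<close>)
    thus ?thesis unfolding J_def by (simp add: prod.reindex)
  qed
  also have "\<dots> \<le> (\<Prod>i<n. ?q)"
  proof (rule prod_mono)
    fix i assume i: "i \<in> {..<n}"
    have a: "ps ! i \<in> nbrs (ps ! Suc i)" using enn[of i] i by (simp add: nbrs_def nn_sym)
    have b: "ps ! Suc (Suc i) \<in> nbrs (ps ! Suc i)" using enn[of "Suc i"] i by (simp add: nbrs_def)
    have ab: "ps ! i \<noteq> ps ! Suc (Suc i)" using dps len i by (auto simp: nth_eq_iff_index_eq)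
    have "X (ps ! Suc i) \<subseteq> {S. ps ! i \<in> S \<and> ps ! Suc (Suc i) \<in> S}" using i by (auto simp: X_def)
    hence "measure (?Mf (ps ! Suc i)) (X (ps ! Suc i)) \<le> measure (?Mf (ps ! Suc i)) {S. ps ! i \<in> S \<and> ps ! Suc (Suc i) \<in> S}"
      by (intro measure_pmf.finite_measure_mono) auto
    also have "\<dots> = ?q" by (rule prob_pair[OF a b ab k1 k2])
    finally show "0 \<le> measure (?Mf (ps ! Suc i)) (X (ps ! Suc i)) \<and> measure (?Mf (ps ! Suc i)) (X (ps ! Suc i)) \<le> ?q"
      by simp
  qed
  also have "\<dots> = ?q ^ n" by simp
  finally show ?thesis .
qed

lemma Apath_bound:
  assumes k1: "1 \<le> k" and k2: "k \<le> 2 * CARD('d::finite)"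
  shows "measure (BnG_space k) (Apath k (Suc n) :: (('d \<Rightarrow> int) \<Rightarrow> ('d \<Rightarrow> int) set) set)
    \<le> real (card (sawset (Suc n) :: ('d \<Rightarrow> int) list set)) * (real (k * (k - 1)) / real (2 * CARD('d) * (2 * CARD('d) - 1))) ^ n"
proof -
  let ?q = "real (k * (k - 1)) / real (2 * CARD('d) * (2 * CARD('d) - 1))"
  let ?E = "\<lambda>ps. {\<omega> \<in> space (BnG_space k). \<forall>i\<in>{..<Suc n}. BnG_edge \<omega> (ps ! i) (ps ! Suc i)}"
  have eq: "Apath k (Suc n) = (\<Union>ps\<in>(sawset (Suc n) :: ('d \<Rightarrow> int) list set). ?E ps)"
    unfolding Apath_def by auto
  have "measure (BnG_space k) (\<Union>ps\<in>(sawset (Suc n) :: ('d \<Rightarrow> int) list set). ?E ps)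
      \<le> (\<Sum>ps\<in>(sawset (Suc n) :: ('d \<Rightarrow> int) list set). measure (BnG_space k) (?E ps))"
    by (rule measure_UNION_le) (auto simp: finite_sawset intro!: sets.sets_Collect_countable_All' edge_sets)
  also have "\<dots> \<le> (\<Sum>ps\<in>(sawset (Suc n) :: ('d \<Rightarrow> int) list set). ?q ^ n)"
    by (rule sum_mono) (rule Eps_bound[OF _ k1 k2])
  also have "\<dots> = real (card (sawset (Suc n) :: ('d \<Rightarrow> int) list set)) * ?q ^ n" by simp
  finally show ?thesis using eq by simp
qed


theorem lemma2p11:
  fixes k :: nat
  assumes "1 \<le> k" and "k \<le> 2 * CARD('d::finite)"
    and "real (k * (k - 1)) < real (2 * CARD('d) * (2 * CARD('d) - 1)) / conn_const TYPE('d)"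
  shows "perc_event k \<in> sets (BnG_space k :: (('d \<Rightarrow> int) \<Rightarrow> ('d \<Rightarrow> int) set) measure)
    \<and> thetaB k TYPE('d) = 0"
proof -
  note k1 = assms(1) and k2 = assms(2) and hyp = assms(3)
  let ?m = "2 * CARD('d)"
  define K where "K = real (k * (k - 1))"
  define M2 where "M2 = real (?m * (?m - 1))"
  define q where "q = K / M2"
  define c where "c = conn_const TYPE('d)"
  define cn where "cn = (\<lambda>n. real (card (sawset n :: ('d \<Rightarrow> int) list set)))"
  have PS: "perc_event k \<in> sets (BnG_space k :: (('d \<Rightarrow> int) \<Rightarrow> ('d \<Rightarrow> int) set) measure)"
    by (rule perc_sets)
  interpret P: prob_space "BnG_space k :: (('d \<Rightarrow> int) \<Rightarrow> ('d \<Rightarrow> int) set) measure" by (rule prob_BnG)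
  have m2: "?m \<ge> 2" by (simp add: Suc_leI)
  have "?m * (?m - 1) > 0" using m2 by (intro mult_pos_pos) arith+
  hence M2pos: "M2 > 0" unfolding M2_def by (simp only: of_nat_0_less_iff)
  have K0: "K \<ge> 0" unfolding K_def by simp
  have hyp': "K < M2 / c" using hyp unfolding K_def M2_def c_def .
  have cpos: "c > 0"
  proof (rule ccontr)
    assume "\<not> c > 0"
    hence "M2 / c \<le> 0" using M2pos by (intro divide_nonneg_nonpos) auto
    thus False using hyp' K0 by linarith
  qed
  have "K * c < M2" using hyp' cpos by (simp add: less_divide_eq)
  hence qc: "q * c < 1" unfolding q_def using M2pos by (simp add: field_simps)
  have q0: "q \<ge> 0" unfolding q_def using K0 M2pos by simp
  define b where "b = c + (1 - q * c) / (2 * (q + 1))"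
  have "(1 - q * c) / (2 * (q + 1)) > 0" using qc q0 by (intro divide_pos_pos) auto
  hence bc: "b > c" unfolding b_def by linarith
  have qb: "q * b < 1"
  proof -
    have "q / (q + 1) \<le> 1" using q0 by simp
    hence "q * ((1 - q * c) / (2 * (q + 1))) \<le> (1 - q * c) / 2"
      using qc q0 by (simp add: field_simps)
    hence "q * b \<le> q * c + (1 - q * c) / 2" unfolding b_def by (simp add: distrib_left)
    thus ?thesis using qc by argo
  qed
  have qb0: "q * b \<ge> 0" using q0 bc cpos by simp
  have conv: "(\<lambda>n. root n (real (saw_count TYPE('d) n))) \<longlonglongrightarrow> c"
    unfolding c_def conn_const_def using conv_root[where 'd='d] by (simp add: convergent_LIMSEQ_iff)
  have "eventually (\<lambda>n. root n (real (saw_count TYPE('d) n)) < b) sequentially"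
    by (rule order_tendstoD(2)[OF conv bc])
  then obtain N where N: "\<And>n. n \<ge> N \<Longrightarrow> root n (real (saw_count TYPE('d) n)) < b"
    unfolding eventually_sequentially by blast
  have bound: "thetaB k TYPE('d) \<le> cn 1 * (q * b) ^ n" if n: "n \<ge> Suc N" for n
  proof -
    have npos: "n > 0" using n by simp
    have "cn n = root n (cn n) ^ n" using npos by (simp add: cn_def real_root_pow_pos2)
    also have "\<dots> \<le> b ^ n"
      using N[of n] n by (intro power_mono) (auto simp: cn_def saw_count_eq real_root_ge_zero)
    finally have cnb: "cn n \<le> b ^ n" .
    have sub: "cn (Suc n) \<le> cn n * cn 1"
      unfolding cn_def using sawset_submult[where 'd='d, of n 1] by (metis Suc_eq_plus1 of_nat_le_iff of_nat_mult)
    have "thetaB k TYPE('d) \<le> measure (BnG_space k) (Apath k (Suc n) :: (('d \<Rightarrow> int) \<Rightarrow> ('d \<Rightarrow> int) set) set)"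
      unfolding thetaB_def
      by (rule P.finite_measure_mono[OF _ Apath_sets]) (auto simp: perc_eq)
    also have "\<dots> \<le> cn (Suc n) * q ^ n"
      using Apath_bound[OF k1 k2, of n] unfolding cn_def q_def K_def M2_def .
    also have "\<dots> \<le> (cn n * cn 1) * q ^ n"
      using sub q0 by (intro mult_right_mono) auto
    also have "\<dots> \<le> (b ^ n * cn 1) * q ^ n"
      using cnb q0 by (intro mult_right_mono) (auto simp: cn_def)
    also have "\<dots> = cn 1 * (q * b) ^ n" by (simp add: power_mult_distrib)
    finally show ?thesis .
  qed
  have lim: "(\<lambda>n. cn 1 * (q * b) ^ n) \<longlonglongrightarrow> 0"
    using tendsto_mult[OF tendsto_const LIMSEQ_power_zero[of "q * b"], of "cn 1"] qb qb0 by simp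
  have "thetaB k TYPE('d) \<le> 0"
    by (rule LIMSEQ_le_const[OF lim]) (use bound in blast)
  moreover have "thetaB k TYPE('d) \<ge> 0" unfolding thetaB_def by simp
  ultimately show ?thesis using PS by simp
qed

end
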